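(* Consider two $2\times 2$ matrices $G, A$ of real numbers, where $A$ is symmetric and positive definite, i.e. \[ G=\begin{pmatrix}a&b\\ c&d\end{pmatrix},\qquad A=\begin{pmatrix}\alpha&\beta\\ \beta&\gamma\end{pmatrix} \quad(\alpha>0,\ \delta:=\det(A)=\alpha\gamma-\beta^{2}>0). \] Then there exists a symmetric matrix $S=\begin{pmatrix}s_{11}& s_{12}\\ s_{12}& s_{22}\end{pmatrix}$ solving \[ SG+G^TS=2SAS\quad \text{and}\quad \mathrm{trace}(G-AS)=0, \] and which is of the following form: \begin{itemize} \item[(i)] If $\mathrm{trace}(G)=a+d=0$, we can choose $S=0$. \item[(ii)] If $\mathrm{trace}(G)=a+d \neq 0$ and $G$ is singular, i.e. $\det(G)=ad-bc=0$, we can choose \begin{eqnarray*} S&=&\frac{a+d}{\alpha a^2+2\beta ab + \gamma b^2}\begin{pmatrix}a^2& ab\\ ab& b^2\end{pmatrix}, \qquad \text{if }\ b\not =0,\\[3pt] S&=&\frac{a+d}{\alpha c^2+2\beta cd + \gamma d^2}\begin{pmatrix}c^2& cd\\ cd& d^2\end{pmatrix}, \qquad \text{if }\ b=0,\ c\not=0, \end{eqnarray*} and in case $b=c=0$, we may choose \begin{eqnarray*} S\ =\ \begin{pmatrix}\frac{a}{\alpha}& 0\\ 0& 0\end{pmatrix}, \qquad \text{if }\ a\not =0,\qquad S\ =\ \begin{pmatrix}0& 0\\ 0& \frac{d}{\gamma}\end{pmatrix}, \qquad \text{if }\ d\not=0. \end{eqnarray*} \item[(iii)] If $\mathrm{trace}(G)=a+d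 \neq 0$ and $G$ is non-singular, i.e. $\det(G)=ad-bc\not=0$, we can choose \begin{eqnarray*} S\ =\ \kappa\begin{pmatrix}\gamma a(a+d) + \alpha c^2 - \gamma bc - 2\beta ac& \alpha cd + \gamma ab - 2\beta ad\\ \alpha cd + \gamma ab - 2\beta ad& \alpha d(a+d) + \gamma b^2 - \alpha bc - 2\beta bd\end{pmatrix}, \end{eqnarray*} where \[ \kappa=\frac{a+d}{ (\alpha \gamma-\beta^2) (a+d)^2 +\big( \gamma b - \alpha c + \beta(a-d)\big)^2}. \] \end{itemize}
   Context: Dimension $d=2$. All matrices have real entries. *)

theory Defs
  imports "HOL-Analysis.Analysis"
begin

definition mat2 :: "real \<Rightarrow> real \<Rightarrow> real \<Rightarrow> real \<Rightarrow> real^2^2" where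
  "mat2 p q r s = vector [vector [p, q], vector [r, s]]"

definition is_sol :: "real^2^2 \<Rightarrow> real^2^2 \<Rightarrow> real^2^2 \<Rightarrow> bool" where
  "is_sol G A S \<longleftrightarrow> transpose S = S
     \<and> S ** G + transpose G ** S = (2::real) *\<^sub>R (S ** A ** S)
     \<and> trace (G - A ** S) = 0"

end

theory Submission
  imports Defs
begin

lemma m2: "mat2 p q r s $ 1 $ 1 = p" "mat2 p q r s $ 1 $ 2 = q" "mat2 p q r s $ 2 $ 1 = r" "mat2 p q r s $ 2 $ 2 = s"
  by (simp_all add: mat2_def)

lemma mat2_scale: "k *\<^sub>R mat2 p q r s = mat2 (k * p) (k * q) (k * r) (k * s)"
  by (simp add: vec_eq_iff forall_2 m2)

lemma mat2_zero: "(0::real^2^2) = mat2 0 0 0 0"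
  by (simp add: vec_eq_iff forall_2 m2)

lemma is_sol_mat2: "is_sol (mat2 a b c d) (mat2 x y y z) (mat2 p q r s) \<longleftrightarrow>
  r = q \<and> p*a + q*c + a*p + c*r = 2*(p*(x*p+y*r) + q*(y*p+z*r))
  \<and> p*b + q*d + a*q + c* s = 2*(p*(x*q+y* s) + q*(y*q+z* s))
  \<and> r*a + s*c + b*p + d*r = 2*(r*(x*p+y*r) + s*(y*p+z*r))
  \<and> r*b + s*d + b*q + d* s = 2*(r*(x*q+y* s) + s*(y*q+z* s))
  \<and> a + d - (x*p+y*r) - (y*q+z* s) = 0"
  unfolding is_sol_def
  by (simp add: vec_eq_iff forall_2 matrix_matrix_mult_def sum_2 transpose_def trace_def m2 algebra_simps)
     (auto simp: algebra_simps)


lemma qpos: assumes "(x::real) > 0" "x*z - y^2 > 0" "u \<noteq> 0 \<or> v \<noteq> 0"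
  shows "x*u^2 + 2*y*u* v + z* v^2 > 0"
proof -
  have e: "x*(x*u^2 + 2*y*u* v + z* v^2) = (x*u+y* v)^2 + (x*z-y^2)* v^2" by (simp add: algebra_simps power2_eq_square)
  have "(x*u+y* v)^2 + (x*z-y^2)* v^2 > 0"
  proof (cases "v = 0")
    case True then have "u \<noteq> 0" using assms by auto
    then show ?thesis using True assms by simp
  next
    case False then show ?thesis using assms by (simp add: add_nonneg_pos)
  qed
  then show ?thesis using e assms by (metis zero_less_mult_pos)
qed

lemma case_b: assumes "x > 0" "x*z - y^2 > 0" "a + d \<noteq> 0" "a*d - b*c = 0" "b \<noteq> 0"
  shows "is_sol (mat2 a b c d) (mat2 x y y z) (((a + d) / (x * a^2 + 2 * y * a * b + z * b^2))
                        *\<^sub>R mat2 (a^2) (a * b) (a * b) (b^2))"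
proof -
  have Q: "x * a^2 + 2 * y * a * b + z * b^2 > 0" using qpos assms by blast
  define k where "k = (a + d) / (x * a^2 + 2 * y * a * b + z * b^2)"
  have kQ: "k * (x * a^2 + 2 * y * a * b + z * b^2) = a + d" using Q unfolding k_def by simp
  have bc: "b * c = a * d" using assms by simp
  show ?thesis unfolding mat2_scale is_sol_mat2 k_def[symmetric]
    proof (intro conjI) qed (insert kQ bc, algebra)+
qed

lemma case_c: assumes "x > 0" "x*z - y^2 > 0" "a + d \<noteq> 0" "a*d - b*c = 0" "b = 0" "c \<noteq> 0"
  shows "is_sol (mat2 a b c d) (mat2 x y y z) (((a + d) / (x * c^2 + 2 * y * c * d + z * d^2))
                        *\<^sub>R mat2 (c^2) (c * d) (c * d) (d^2))"
proof -
  have Q: "x * c^2 + 2 * y * c * d + z * d^2 > 0" using qpos assms by blast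
  define k where "k = (a + d) / (x * c^2 + 2 * y * c * d + z * d^2)"
  have kQ: "k * (x * c^2 + 2 * y * c * d + z * d^2) = a + d" using Q unfolding k_def by simp
  have bc: "a * d = 0" "b = 0" using assms by simp_all
  show ?thesis unfolding mat2_scale is_sol_mat2 k_def[symmetric]
    proof (intro conjI) qed (insert kQ bc, algebra)+
qed

lemma case_a: assumes "x > 0" "a \<noteq> 0" "a*d - b*c = 0" "b = 0" "c = 0"
  shows "is_sol (mat2 a b c d) (mat2 x y y z) (mat2 (a / x) 0 0 0)"
proof -
  have "d = 0" using assms by simp
  then show ?thesis using assms unfolding is_sol_mat2 by (simp add: field_simps power2_eq_square)
qed

lemma case_d: assumes "x > 0" "x*z - y^2 > 0" "d \<noteq> 0" "a*d - b*c = 0" "b = 0" "c = 0"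
  shows "is_sol (mat2 a b c d) (mat2 x y y z) (mat2 0 0 0 (d / z))"
proof -
  have "a = 0" using assms by simp
  moreover have "z > 0"
  proof -
    have "x * z > 0" using assms(2) by (smt (verit) zero_le_power2)
    then show ?thesis using assms(1) by (simp add: zero_less_mult_iff)
  qed
  ultimately show ?thesis using assms unfolding is_sol_mat2 by (simp add: field_simps power2_eq_square)
qed

lemma case_iii: assumes "x > 0" "x*z - y^2 > 0" "a + d \<noteq> 0"
  shows "let \<kappa> = (a + d) / ((x * z - y^2) * (a + d)^2
                            + (z * b - x * c + y * (a - d))^2)
          in is_sol (mat2 a b c d) (mat2 x y y z) (\<kappa> *\<^sub>R mat2
               (z * a * (a + d) + x * c^2 - z * b * c - 2 * y * a * c)
               (x * c * d + z * a * b - 2 * y * a * d)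
               (x * c * d + z * a * b - 2 * y * a * d)
               (x * d * (a + d) + z * b^2 - x * b * c - 2 * y * b * d))"
proof -
  have D: "(x * z - y^2) * (a + d)^2 + (z * b - x * c + y * (a - d))^2 > 0"
    using assms by (simp add: add_pos_nonneg)
  define k where "k = (a + d) / ((x * z - y^2) * (a + d)^2
                            + (z * b - x * c + y * (a - d))^2)"
  have kQ: "k * ((x * z - y^2) * (a + d)^2
                            + (z * b - x * c + y * (a - d))^2) = a + d" using D unfolding k_def by simp
  show ?thesis unfolding Let_def mat2_scale is_sol_mat2 k_def[symmetric]
    proof (intro conjI) qed (insert kQ, algebra)+
qed

theorem theorem2p13:
  fixes a b c d \<alpha> \<beta> \<gamma> :: real and G A :: "real^2^2"
  assumes hG: "G = mat2 a b c d"
    and hA: "A = mat2 \<alpha> \<beta> \<beta> \<gamma>"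
    and h\<alpha>: "\<alpha> > 0"
    and h\<delta>: "\<alpha> * \<gamma> - \<beta>^2 > 0"
  shows "(\<exists>S. is_sol G A S)
    \<and> (a + d = 0 \<longrightarrow> is_sol G A 0)
    \<and> (a + d \<noteq> 0 \<and> a * d - b * c = 0 \<and> b \<noteq> 0 \<longrightarrow>
         is_sol G A (((a + d) / (\<alpha> * a^2 + 2 * \<beta> * a * b + \<gamma> * b^2))
                        *\<^sub>R mat2 (a^2) (a * b) (a * b) (b^2)))
    \<and> (a + d \<noteq> 0 \<and> a * d - b * c = 0 \<and> b = 0 \<and> c \<noteq> 0 \<longrightarrow>
         is_sol G A (((a + d) / (\<alpha> * c^2 + 2 * \<beta> * c * d + \<gamma> * d^2))
                        *\<^sub>R mat2 (c^2) (c * d) (c * d) (d^2)))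
    \<and> (a + d \<noteq> 0 \<and> a * d - b * c = 0 \<and> b = 0 \<and> c = 0 \<and> a \<noteq> 0 \<longrightarrow>
         is_sol G A (mat2 (a / \<alpha>) 0 0 0))
    \<and> (a + d \<noteq> 0 \<and> a * d - b * c = 0 \<and> b = 0 \<and> c = 0 \<and> d \<noteq> 0 \<longrightarrow>
         is_sol G A (mat2 0 0 0 (d / \<gamma>)))
    \<and> (a + d \<noteq> 0 \<and> a * d - b * c \<noteq> 0 \<longrightarrow>
         (let \<kappa> = (a + d) / ((\<alpha> * \<gamma> - \<beta>^2) * (a + d)^2
                            + (\<gamma> * b - \<alpha> * c + \<beta> * (a - d))^2)
          in is_sol G A (\<kappa> *\<^sub>R mat2
               (\<gamma> * a * (a + d) + \<alpha> * c^2 - \<gamma> * b * c - 2 * \<beta> * a * c)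
               (\<alpha> * c * d + \<gamma> * a * b - 2 * \<beta> * a * d)
               (\<alpha> * c * d + \<gamma> * a * b - 2 * \<beta> * a * d)
               (\<alpha> * d * (a + d) + \<gamma> * b^2 - \<alpha> * b * c - 2 * \<beta> * b * d))))"
proof -
  have z: "(0::real^2^2) = mat2 0 0 0 0" by (rule mat2_zero)
  have i: "a + d = 0 \<longrightarrow> is_sol G A 0"
    unfolding hG hA z is_sol_mat2 by simp
  have ii1: "a + d \<noteq> 0 \<and> a * d - b * c = 0 \<and> b \<noteq> 0 \<longrightarrow>
         is_sol G A (((a + d) / (\<alpha> * a^2 + 2 * \<beta> * a * b + \<gamma> * b^2))
                        *\<^sub>R mat2 (a^2) (a * b) (a * b) (b^2))"
    unfolding hG hA using case_b h\<alpha> h\<delta> by blast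
  have ii2: "a + d \<noteq> 0 \<and> a * d - b * c = 0 \<and> b = 0 \<and> c \<noteq> 0 \<longrightarrow>
         is_sol G A (((a + d) / (\<alpha> * c^2 + 2 * \<beta> * c * d + \<gamma> * d^2))
                        *\<^sub>R mat2 (c^2) (c * d) (c * d) (d^2))"
    unfolding hG hA using case_c h\<alpha> h\<delta> by blast
  have ii3: "a + d \<noteq> 0 \<and> a * d - b * c = 0 \<and> b = 0 \<and> c = 0 \<and> a \<noteq> 0 \<longrightarrow>
         is_sol G A (mat2 (a / \<alpha>) 0 0 0)"
    unfolding hG hA using case_a h\<alpha> by blast
  have ii4: "a + d \<noteq> 0 \<and> a * d - b * c = 0 \<and> b = 0 \<and> c = 0 \<and> d \<noteq> 0 \<longrightarrow>
         is_sol G A (mat2 0 0 0 (d / \<gamma>))"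
    unfolding hG hA using case_d h\<alpha> h\<delta> by blast
  have iii: "a + d \<noteq> 0 \<and> a * d - b * c \<noteq> 0 \<longrightarrow>
         (let \<kappa> = (a + d) / ((\<alpha> * \<gamma> - \<beta>^2) * (a + d)^2
                            + (\<gamma> * b - \<alpha> * c + \<beta> * (a - d))^2)
          in is_sol G A (\<kappa> *\<^sub>R mat2
               (\<gamma> * a * (a + d) + \<alpha> * c^2 - \<gamma> * b * c - 2 * \<beta> * a * c)
               (\<alpha> * c * d + \<gamma> * a * b - 2 * \<beta> * a * d)
               (\<alpha> * c * d + \<gamma> * a * b - 2 * \<beta> * a * d)
               (\<alpha> * d * (a + d) + \<gamma> * b^2 - \<alpha> * b * c - 2 * \<beta> * b * d)))"
    unfolding hG hA using case_iii[OF h\<alpha> h\<delta>] by blast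
  have ex: "\<exists>S. is_sol G A S"
  proof (cases "a + d = 0")
    case True then show ?thesis using i by blast
  next
    case False
    show ?thesis
    proof (cases "a * d - b * c = 0")
      case False
      then show ?thesis using iii \<open>a + d \<noteq> 0\<close> unfolding Let_def by blast
    next
      case sing: True
      show ?thesis
      proof (cases "b = 0")
        case False then show ?thesis using ii1 sing \<open>a + d \<noteq> 0\<close> by blast
      next
        case b0: True
        show ?thesis
        proof (cases "c = 0")
          case False then show ?thesis using ii2 sing b0 \<open>a + d \<noteq> 0\<close> by blast
        next
          case True
          then show ?thesis using ii3 ii4 sing b0 \<open>a + d \<noteq> 0\<close> by (cases "a = 0") auto
        qed
      qed
    qed
  qed
  show ?thesis using ex i ii1 ii2 ii3 ii4 iii by blast
qed

end
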